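(* Let $p\neq q$ be primes and $m,n$ positive integers. Then the quotient $Q(x)=\mathrm P_{\langle p^m,q^n\rangle}(x)/\Phi_{p^mq^n}(x)$ is a monic polynomial in $\mathbb Z[x]$ with constant coefficient $1$, and its nonzero coefficients alternate between $1$ and $-1$.
   Context: For a numerical semigroup $S$ (submonoid of $(\mathbb N,+)$ with finite complement), $\mathrm P_S(x)=(1-x)\sum_{s\in S}x^s$. $\langle a,b\rangle$ is the submonoid generated by $a,b$. $\Phi_N$ denotes the $N$-th cyclotomic polynomial. *)

theory Defs
  imports "HOL-Computational_Algebra.Computational_Algebra" "HOL-Analysis.Analysis"
begin

definition semigroup_gen :: "nat \<Rightarrow> nat \<Rightarrow> nat set" where
  "semigroup_gen a b = {i * a + j * b | i j. True}"

definition semigroup_poly_fps :: "nat set \<Rightarrow> int fps" where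
  "semigroup_poly_fps S = (1 - fps_X) * Abs_fps (\<lambda>k. if k \<in> S then 1 else 0)"

definition cyclotomic :: "nat \<Rightarrow> complex poly" where
  "cyclotomic N = (\<Prod>k\<in>{k\<in>{1..N}. coprime k N}.
       [:- cis (2 * pi * real k / real N), 1:])"

end

theory Submission
  imports Defs "HOL-Number_Theory.Cong"
begin


lemma fps_one_minus_Xpow_nth:
  "((1 - fps_X ^ c) * (f :: 'a :: comm_ring_1 fps)) $ s = f $ s - (if c \<le> s then f $ (s - c) else 0)"
  by (simp add: left_diff_distrib fps_X_power_mult_nth)

lemma fps_sum_X_powers:
  assumes "finite I" "inj_on e I"
  shows "(\<Sum>i\<in>I. fps_X ^ (e i) :: 'a :: comm_ring_1 fps) = Abs_fps (\<lambda>s. if s \<in> e ` I then 1 else 0)"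
proof (rule fps_ext)
  fix s
  have "(\<Sum>i\<in>I. fps_X ^ (e i) :: 'a fps) $ s = (\<Sum>i\<in>I. (if s = e i then 1 else 0 :: 'a))"
    by (simp add: fps_sum_nth)
  also have "\<dots> = (\<Sum>j\<in>e ` I. (if s = j then 1 else 0 :: 'a))"
    by (subst sum.reindex[OF assms(2)]) (simp add: o_def)
  also have "\<dots> = (if s \<in> e ` I then 1 else 0)"
    using assms by (simp add: sum.delta)
  finally show "(\<Sum>i\<in>I. fps_X ^ (e i) :: 'a fps) $ s = Abs_fps (\<lambda>s. if s \<in> e ` I then 1 else 0) $ s" by simp
qed

lemma S_mem: "s \<in> semigroup_gen a b \<longleftrightarrow> (\<exists>i j. s = i * a + j * b)"
  by (auto simp: semigroup_gen_def)

lemma S_case1: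
  fixes a b :: nat
  assumes "a > 0" "b > 0" "coprime a b" "j < a" "a \<le> j * b" "j * b - a = i * a + l * b"
  shows False
proof -
  have e: "j * b = (i+1) * a + l * b" using assms by simp
  hence "l * b \<le> j * b" by simp
  hence lj: "l \<le> j" using assms by simp
  have "(j - l) * b = (i+1) * a" using e lj by (simp add: diff_mult_distrib)
  hence "a dvd (j - l) * b" by (metis dvd_triv_right)
  hence "a dvd (j - l)" using assms(3) by (simp add: coprime_dvd_mult_left_iff)
  moreover have "j - l > 0" using \<open>(j - l) * b = (i+1) * a\<close> assms by (metis add_gr_0 mult_is_0 not_gr_zero zero_less_one)
  ultimately have "a \<le> j - l" by (simp add: dvd_imp_le)
  thus False using assms lj by linarith
qed

lemma S_apery:
  fixes a b :: nat
  assumes "a > 0" "b > 0" "coprime a b"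
  shows "(1 - fps_X ^ a) * Abs_fps (\<lambda>k. if k \<in> semigroup_gen a b then 1 else 0)
         = (\<Sum>j<a. fps_X ^ (j * b) :: 'r :: comm_ring_1 fps)"
proof -
  have inj: "inj_on (\<lambda>j. j * b) {..<a}" using assms by (auto simp: inj_on_def)
  show ?thesis
  proof (subst fps_sum_X_powers[OF _ inj], simp, rule fps_ext)
    fix s
    show "((1 - fps_X ^ a) * Abs_fps (\<lambda>k. if k \<in> semigroup_gen a b then 1 else 0)) $ s
         = Abs_fps (\<lambda>s. if s \<in> (\<lambda>j. j * b) ` {..<a} then 1 else 0 :: 'r) $ s"
    proof (cases "s \<in> (\<lambda>j. j * b) ` {..<a}")
      case True
      then obtain j where j: "j < a" "s = j * b" by auto
      have "s \<in> semigroup_gen a b" unfolding S_mem using j by (metis add_0 mult_0)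
      moreover have "\<not> (a \<le> s \<and> s - a \<in> semigroup_gen a b)"
        using S_case1[OF assms j(1)] j unfolding S_mem by blast
      ultimately show ?thesis using True by (auto simp: fps_one_minus_Xpow_nth)
    next
      case False
      have "(s \<in> semigroup_gen a b) = (a \<le> s \<and> s - a \<in> semigroup_gen a b)"
      proof
        assume "s \<in> semigroup_gen a b"
        then obtain i l where il: "s = i * a + l * b" unfolding S_mem by blast
        show "a \<le> s \<and> s - a \<in> semigroup_gen a b"
        proof (cases i)
          case (Suc i')
          hence "s - a = i' * a + l * b" using il by simp
          thus ?thesis using il Suc unfolding S_mem by auto
        next
          case 0
          hence "l \<ge> a" using False il by (metis add_0 image_eqI lessThan_iff mult_0 not_le)
          then obtain d where d: "l = a + d" using le_Suc_ex by blast
          obtain b' where b': "b = Suc b'" using assms(2) gr0_implies_Suc by blast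
          have "s = a + (b' * a + d * b)" using il 0 d b' by (simp add: algebra_simps)
          hence "a \<le> s" "s - a = b' * a + d * b" by simp_all
          thus ?thesis unfolding S_mem by blast
        qed
      next
        assume "a \<le> s \<and> s - a \<in> semigroup_gen a b"
        then obtain i l where "a \<le> s" "s - a = i * a + l * b" unfolding S_mem by blast
        hence "s = (i+1) * a + l * b" by simp
        thus "s \<in> semigroup_gen a b" unfolding S_mem by blast
      qed
      thus ?thesis using False by (auto simp: fps_one_minus_Xpow_nth)
    qed
  qed
qed



definition Tset :: "nat \<Rightarrow> nat \<Rightarrow> nat \<Rightarrow> nat \<Rightarrow> nat set" where
  "Tset a b a' b' = {a * k + b * l + (a' * b') * t | k l t. k < a' \<and> l < b'}"

lemma T_unique_half:
  fixes a b a' b' :: nat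
  assumes "coprime a a'" "a' dvd b" "k < a'" "k' < a'"
    and "(a * k + b * l) mod (a' * b') = (a * k' + b * l') mod (a' * b')"
  shows "k = k'"
proof -
  have "[a * k + b * l = a * k' + b * l'] (mod a')"
    using assms(5) unfolding cong_def[symmetric] by (rule cong_dvd_modulus_nat) simp
  moreover have "[b * l = 0] (mod a')" "[b * l' = 0] (mod a')"
    using assms(2) by (simp_all add: cong_0_iff)
  ultimately have "[a * k + 0 = a * k' + 0] (mod a')"
    by (meson cong_add cong_refl cong_sym cong_trans)
  hence "[k = k'] (mod a')" using assms(1) cong_mult_lcancel_nat by simp
  thus ?thesis using assms(3,4) cong_less_imp_eq_nat by blast
qed

lemma T_unique:
  fixes a b a' b' :: nat
  assumes "coprime a a'" "coprime b b'" "a' dvd b" "b' dvd a"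
    and "k < a'" "k' < a'" "l < b'" "l' < b'"
    and "(a * k + b * l) mod (a' * b') = (a * k' + b * l') mod (a' * b')"
  shows "k = k' \<and> l = l'"
proof
  show "k = k'" using T_unique_half[OF assms(1,3,5,6,9)] .
  have "(b * l + a * k) mod (b' * a') = (b * l' + a * k') mod (b' * a')"
    using assms(9) by (simp add: ac_simps)
  thus "l = l'" using T_unique_half[OF assms(2,4,7,8)] by blast
qed



lemma T_mem: "s \<in> Tset a b a' b' \<longleftrightarrow> (\<exists>k l t. k < a' \<and> l < b' \<and> s = a * k + b * l + (a' * b') * t)"
  by (auto simp: Tset_def)

lemma T_inj:
  fixes a b a' b' :: nat
  assumes "coprime a a'" "coprime b b'" "a' dvd b" "b' dvd a"
  shows "inj_on (\<lambda>(k, l). (a * k + b * l) mod (a' * b')) ({..<a'} \<times> {..<b'})"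
  using T_unique[OF assms] by (auto simp: inj_on_def)

lemma T_inj':
  fixes a b a' b' :: nat
  assumes "coprime a a'" "coprime b b'" "a' dvd b" "b' dvd a"
  shows "inj_on (\<lambda>(k, l). a * k + b * l) ({..<a'} \<times> {..<b'})"
  using T_unique[OF assms] by (auto simp: inj_on_def)

lemma T_apery:
  fixes a b a' b' :: nat
  assumes "coprime a a'" "coprime b b'" "a' dvd b" "b' dvd a" "a' > 0" "b' > 0"
  shows "(1 - fps_X ^ (a' * b')) * Abs_fps (\<lambda>s. if s \<in> Tset a b a' b' then 1 else 0)
         = (\<Sum>x\<in>{..<a'} \<times> {..<b'}. fps_X ^ ((\<lambda>(k, l). a * k + b * l) x) :: 'r :: comm_ring_1 fps)"
proof (subst fps_sum_X_powers[OF _ T_inj'[OF assms(1-4)]], simp, rule fps_ext)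
  fix s
  define c where "c = a' * b'"
  have c0: "c > 0" using assms(5,6) by (simp add: c_def)
  let ?Ap = "(\<lambda>(k, l). a * k + b * l) ` ({..<a'} \<times> {..<b'})"
  show "((1 - fps_X ^ (a' * b')) * Abs_fps (\<lambda>s. if s \<in> Tset a b a' b' then 1 else 0)) $ s
         = Abs_fps (\<lambda>s. if s \<in> ?Ap then 1 else 0 :: 'r) $ s"
  proof (cases "s \<in> ?Ap")
    case True
    then obtain k l where kl: "k < a'" "l < b'" "s = a * k + b * l" by auto
    have "s \<in> Tset a b a' b'" unfolding T_mem using kl by (metis add_0_right mult_0_right)
    moreover have "\<not> (c \<le> s \<and> s - c \<in> Tset a b a' b')"
    proof
      assume "c \<le> s \<and> s - c \<in> Tset a b a' b'"
      then obtain k' l' t where kl': "k' < a'" "l' < b'" "c \<le> s" "s - c = a * k' + b * l' + c * t"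
        unfolding T_mem c_def by blast
      hence e: "a * k + b * l = a * k' + b * l' + c * (Suc t)" using kl by simp
      hence "(a * k + b * l) mod c = (a * k' + b * l') mod c" by (metis mod_mult_self1 mult.commute)
      hence "k = k' \<and> l = l'" using T_unique[OF assms(1-4) kl(1) kl'(1) kl(2) kl'(2)] c_def by simp
      thus False using e c0 by simp
    qed
    ultimately show ?thesis using True by (auto simp: fps_one_minus_Xpow_nth c_def)
  next
    case False
    have "(s \<in> Tset a b a' b') = (c \<le> s \<and> s - c \<in> Tset a b a' b')"
    proof
      assume "s \<in> Tset a b a' b'"
      then obtain k l t where kl: "k < a'" "l < b'" "s = a * k + b * l + c * t"
        unfolding T_mem c_def by blast
      show "c \<le> s \<and> s - c \<in> Tset a b a' b'"
      proof (cases t)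
        case 0
        hence "s \<in> ?Ap" using kl by auto
        thus ?thesis using False by simp
      next
        case (Suc t')
        hence "c \<le> s" "s - c = a * k + b * l + c * t'" using kl by simp_all
        thus ?thesis using kl unfolding T_mem c_def by blast
      qed
    next
      assume "c \<le> s \<and> s - c \<in> Tset a b a' b'"
      then obtain k l t where kl: "k < a'" "l < b'" "c \<le> s" "s - c = a * k + b * l + c * t"
        unfolding T_mem c_def by blast
      hence "s = a * k + b * l + c * Suc t" by simp
      thus "s \<in> Tset a b a' b'" using kl unfolding T_mem c_def by blast
    qed
    thus ?thesis using False by (auto simp: fps_one_minus_Xpow_nth c_def)
  qed
qed

lemma T_eventually:
  fixes a b a' b' :: nat
  assumes "coprime a a'" "coprime b b'" "a' dvd b" "b' dvd a" "a' > 0" "b' > 0"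
    and "s \<ge> a * a' + b * b'"
  shows "s \<in> Tset a b a' b'"
proof -
  define c where "c = a' * b'"
  have c0: "c > 0" using assms(5,6) by (simp add: c_def)
  define h where "h = (\<lambda>(k, l). (a * k + b * l) mod c)"
  define D where "D = {..<a'} \<times> {..<b'}"
  have inj: "inj_on h D" using T_inj[OF assms(1-4)] by (simp add: h_def D_def c_def)
  have sub: "h ` D \<subseteq> {..<c}" using c0 by (auto simp: h_def)
  have "card (h ` D) = card {..<c}" using inj by (simp add: card_image D_def c_def card_cartesian_product)
  hence eq: "h ` D = {..<c}" using sub by (intro card_subset_eq) auto
  have "s mod c \<in> {..<c}" using c0 by simp
  then obtain k l where kl: "k < a'" "l < b'" "(a * k + b * l) mod c = s mod c"
    unfolding eq[symmetric] by (auto simp: h_def D_def)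
  have "a * k \<le> a * a'" "b * l \<le> b * b'" using kl by simp_all
  hence le: "a * k + b * l \<le> s" using assms(7) by linarith
  hence "c dvd s - (a * k + b * l)" using kl(3) mod_eq_dvd_iff_nat by metis
  then obtain t where "s - (a * k + b * l) = c * t" by blast
  hence "s = a * k + b * l + c * t" using le by simp
  thus ?thesis unfolding T_mem c_def using kl by blast
qed



lemma cis_root_eq_1:
  assumes "N > 0"
  shows "cis (2 * pi * real r / real N) = 1 \<longleftrightarrow> N dvd r"
proof -
  have "cis (2 * pi * real r / real N) = exp(2 * of_real pi * \<i> * of_nat r / of_nat N)"
    by (simp add: cis_conv_exp field_simps)
  thus ?thesis using complex_root_unity_eq_1[of N r] assms by simp
qed

lemma cis_root_pow:
  "cis (2 * pi * real k / real N) ^ M = cis (2 * pi * real (k * M) / real N)"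
  unfolding Complex.DeMoivre by (rule arg_cong[where f=cis]) (simp add: field_simps)

lemma unity_poly:
  assumes "M > 0"
  shows "(monom 1 M - 1 :: complex poly) = (\<Prod>z\<in>{z. z ^ M = 1}. [:-z, 1:])"
proof -
  define P where "P = (monom 1 M - 1 :: complex poly)"
  have pz: "poly P z = 0 \<longleftrightarrow> z ^ M = 1" for z by (simp add: P_def poly_monom)
  have "lead_coeff (-1 + monom (1::complex) M) = 1"
    using assms by (subst lead_coeff_add_le) (simp_all add: degree_monom_eq)
  hence lc: "lead_coeff P = 1" by (simp add: P_def)
  have "rsquarefree P"
    unfolding rsquarefree_roots
  proof (intro allI notI)
    fix z assume "poly P z = 0 \<and> poly (pderiv P) z = 0"
    hence "z ^ M = 1" "of_nat M * z ^ (M - 1) = 0"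
      by (auto simp: pz P_def pderiv_diff pderiv_monom poly_monom)
    thus False using assms by (cases "z = 0") (auto simp: zero_power)
  qed
  from complex_poly_decompose_rsquarefree[OF this] lc
  have "P = (\<Prod>z|poly P z = 0. [:-z, 1:])" by simp
  moreover have "{z. poly P z = 0} = {z. z ^ M = 1}" using pz by auto
  ultimately have "P = (\<Prod>z\<in>{z. z ^ M = 1}. [:-z, 1:])" by metis
  thus ?thesis unfolding P_def .
qed



lemma pq_dvd_iff: "prime (p::nat) \<Longrightarrow> prime q \<Longrightarrow> p \<noteq> q \<Longrightarrow> p * q dvd k \<longleftrightarrow> p dvd k \<and> q dvd k"
  by (metis dvdE dvd_mult_right gcd_nat.eq_iff mult.commute mult_dvd_mono prime_dvd_multD primes_dvd_imp_eq)

lemma prime_coprime_iff': "prime (p::nat) \<Longrightarrow> coprime k p \<longleftrightarrow> \<not> p dvd k"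
  by (metis coprime_commute coprime_imp_gcd_eq_1 gcd_proj1_if_dvd_nat not_prime_1 prime_imp_coprime_nat)

lemma coprime_pq_pow: "m > 0 \<Longrightarrow> n > 0 \<Longrightarrow> coprime (k::nat) (p^m*q^n) \<longleftrightarrow> coprime k p \<and> coprime k q"
  by simp

lemma unity_prod:
  assumes "N > 0" "M > 0" "M dvd N"
  shows "(monom 1 M - 1 :: complex poly)
        = (\<Prod>k\<in>{k. k < N \<and> N dvd k * M}. [:-cis (2 * pi * real k / real N), 1:])"
proof -
  define h where "h = (\<lambda>k::nat. cis (2 * pi * real k / real N))"
  have bij0: "bij_betw h {..<N} {z. z ^ N = 1}" unfolding h_def by (rule Complex.bij_betw_roots_unity[OF assms(1)])
  have hp: "h k ^ M = 1 \<longleftrightarrow> N dvd k * M" for k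
    unfolding h_def cis_root_pow using cis_root_eq_1[OF assms(1), of "k * M"] by simp
  have bij: "bij_betw h {k. k < N \<and> N dvd k * M} {z. z ^ M = 1}"
    unfolding bij_betw_def
  proof
    show "inj_on h {k. k < N \<and> N dvd k * M}"
      using bij_betw_imp_inj_on[OF bij0] by (rule inj_on_subset) auto
    show "h ` {k. k < N \<and> N dvd k * M} = {z. z ^ M = 1}"
    proof
      show "h ` {k. k < N \<and> N dvd k * M} \<subseteq> {z. z ^ M = 1}" using hp by auto
      show "{z. z ^ M = 1} \<subseteq> h ` {k. k < N \<and> N dvd k * M}"
      proof
        fix z :: complex assume "z \<in> {z. z ^ M = 1}"
        hence zM: "z ^ M = 1" by simp
        obtain r where r: "N = M * r" using assms(3) by blast
        have "z ^ N = 1" using zM by (simp add: r power_mult)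
        hence "z \<in> h ` {..<N}" using bij_betw_imp_surj_on[OF bij0] by blast
        then obtain k where "k < N" "z = h k" by auto
        thus "z \<in> h ` {k. k < N \<and> N dvd k * M}" using hp zM by auto
      qed
    qed
  qed
  have "(monom 1 M - 1 :: complex poly) = (\<Prod>z\<in>{z. z ^ M = 1}. [:-z, 1:])"
    using unity_poly[OF assms(2)] .
  also have "\<dots> = (\<Prod>k\<in>{k. k < N \<and> N dvd k * M}. [:-h k, 1:])"
    using prod.reindex_bij_betw[OF bij, of "\<lambda>z. [:-z, 1:]"] by simp
  finally show ?thesis unfolding h_def .
qed

lemma cyclotomic_alt:
  assumes "N > 1"
  shows "cyclotomic N = (\<Prod>k\<in>{k. k < N \<and> coprime k N}. [:-cis (2 * pi * real k / real N), 1:])"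
proof -
  have "{k\<in>{1..N}. coprime k N} = {k. k < N \<and> coprime k N}"
  proof -
    have ne0: "k \<noteq> 0" if "coprime k N" for k using that assms by (cases "k = 0") auto
    have neN: "k \<noteq> N" if "coprime k N" for k using that assms by (cases "k = N") auto
    show ?thesis
    proof (intro set_eqI iffI)
      fix k assume "k \<in> {k\<in>{1..N}. coprime k N}"
      thus "k \<in> {k. k < N \<and> coprime k N}" using neN by fastforce
    next
      fix k assume k: "k \<in> {k. k < N \<and> coprime k N}"
      hence "k \<noteq> 0" using ne0 by blast
      thus "k \<in> {k\<in>{1..N}. coprime k N}" using k by auto
    qed
  qed
  thus ?thesis unfolding cyclotomic_def by simp
qed

lemma cyclo_identity:
  fixes p q m n :: nat
  assumes pq: "prime p" "prime q" "p \<noteq> q" and mn: "m > 0" "n > 0"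
  defines "N \<equiv> p ^ m * q ^ n" and "c \<equiv> p ^ (m - 1) * q ^ (n - 1)"
  shows "cyclotomic N * (monom 1 (c * p) - 1) * (monom 1 (c * q) - 1)
         = (monom 1 N - 1) * (monom 1 c - 1)"
proof -
  have p0: "p > 0" "q > 0" using pq prime_gt_0_nat by auto
  have p1: "p > 1" using pq prime_gt_1_nat by auto
  have c0: "c > 0" using p0 by (simp add: c_def)
  have Nc: "N = c * p * q"
  proof -
    have "p ^ m = p ^ (m - 1) * p" "q ^ n = q ^ (n - 1) * q" using mn by (simp_all add: power_eq_if)
    thus ?thesis unfolding N_def c_def by (simp add: ac_simps)
  qed
  have N0: "N > 0" using Nc c0 p0 by simp
  have "c * p \<ge> 1" using c0 p0 by simp
  hence "c * p * q \<ge> 1 * q" by (rule mult_le_mono1)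
  hence N1: "N > 1" using Nc prime_gt_1_nat[OF pq(2)] by linarith
  define f where "f = (\<lambda>k::nat. [:-cis (2 * pi * real k / real N), 1:])"
  have KN: "{k. k < N \<and> N dvd k * N} = {..<N}" by auto
  have Kp: "{k. k < N \<and> N dvd k * (c * p)} = {k. k < N \<and> q dvd k}"
  proof -
    have "N dvd k * (c * p) \<longleftrightarrow> q dvd k" for k
    proof -
      have "N = q * (c * p)" using Nc by (simp add: ac_simps)
      thus ?thesis using c0 p0 dvd_times_right_cancel_iff[of "c * p" q k] by simp
    qed
    thus ?thesis by simp
  qed
  have Kq: "{k. k < N \<and> N dvd k * (c * q)} = {k. k < N \<and> p dvd k}"
  proof -
    have "N dvd k * (c * q) \<longleftrightarrow> p dvd k" for k
    proof -
      have "N = p * (c * q)" using Nc by (simp add: ac_simps)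
      thus ?thesis using c0 p0 dvd_times_right_cancel_iff[of "c * q" p k] by simp
    qed
    thus ?thesis by simp
  qed
  have Kc: "{k. k < N \<and> N dvd k * c} = {k. k < N \<and> p dvd k \<and> q dvd k}"
  proof -
    have "N dvd k * c \<longleftrightarrow> p dvd k \<and> q dvd k" for k
    proof -
      have "N = (p * q) * c" using Nc by (simp add: ac_simps)
      hence "N dvd k * c \<longleftrightarrow> p * q dvd k" using c0 dvd_times_right_cancel_iff[of c "p * q" k] by simp
      thus ?thesis using pq_dvd_iff[OF pq] by simp
    qed
    thus ?thesis by simp
  qed
  have Pr: "{k. k < N \<and> coprime k N} = {k. k < N \<and> \<not> p dvd k \<and> \<not> q dvd k}"
    unfolding N_def using mn pq by (simp add: prime_coprime_iff')
  have e1: "cyclotomic N = prod f {k. k < N \<and> \<not> p dvd k \<and> \<not> q dvd k}"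
    using cyclotomic_alt[OF N1] Pr f_def by simp
  have e2: "(monom 1 (c * p) - 1 :: complex poly) = prod f {k. k < N \<and> q dvd k}"
    using unity_prod[OF N0, of "c * p"] Kp c0 p0 Nc f_def by simp
  have e3: "(monom 1 (c * q) - 1 :: complex poly) = prod f {k. k < N \<and> p dvd k}"
    using unity_prod[OF N0, of "c * q"] Kq c0 p0 Nc f_def by simp
  have e4: "(monom 1 N - 1 :: complex poly) = prod f {..<N}"
    using unity_prod[OF N0 N0] KN f_def by simp
  have e5: "(monom 1 c - 1 :: complex poly) = prod f {k. k < N \<and> p dvd k \<and> q dvd k}"
    using unity_prod[OF N0 c0] Kc Nc f_def by simp
  have u1: "prod f {k. k < N \<and> q dvd k} * prod f {k. k < N \<and> p dvd k}
      = prod f {k. k < N \<and> (p dvd k \<or> q dvd k)} * prod f {k. k < N \<and> p dvd k \<and> q dvd k}"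
  proof -
    have "prod f ({k. k < N \<and> q dvd k} \<union> {k. k < N \<and> p dvd k}) * prod f ({k. k < N \<and> q dvd k} \<inter> {k. k < N \<and> p dvd k})
       = prod f {k. k < N \<and> q dvd k} * prod f {k. k < N \<and> p dvd k}"
      by (rule prod.union_inter) auto
    moreover have "{k. k < N \<and> q dvd k} \<union> {k. k < N \<and> p dvd k} = {k. k < N \<and> (p dvd k \<or> q dvd k)}" by auto
    moreover have "{k. k < N \<and> q dvd k} \<inter> {k. k < N \<and> p dvd k} = {k. k < N \<and> p dvd k \<and> q dvd k}" by auto
    ultimately show ?thesis by simp
  qed
  have u2: "prod f {k. k < N \<and> \<not> p dvd k \<and> \<not> q dvd k} * prod f {k. k < N \<and> (p dvd k \<or> q dvd k)}
      = prod f {..<N}"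
  proof -
    have "prod f ({k. k < N \<and> \<not> p dvd k \<and> \<not> q dvd k} \<union> {k. k < N \<and> (p dvd k \<or> q dvd k)})
       = prod f {k. k < N \<and> \<not> p dvd k \<and> \<not> q dvd k} * prod f {k. k < N \<and> (p dvd k \<or> q dvd k)}"
      by (rule prod.union_disjoint) auto
    moreover have "{k. k < N \<and> \<not> p dvd k \<and> \<not> q dvd k} \<union> {k. k < N \<and> (p dvd k \<or> q dvd k)} = {..<N}" by auto
    ultimately show ?thesis by simp
  qed
  show ?thesis unfolding e1 e2 e3 e4 e5
    by (simp only: mult.assoc u1) (simp only: mult.assoc[symmetric] u2)
qed



lemma alt_poly:
  fixes f :: "nat \<Rightarrow> int" and B :: nat
  assumes f01: "\<And>s. f s = 0 \<or> f s = 1" and f0: "f 0 = 1" and fB: "\<And>s. s \<ge> B \<Longrightarrow> f s = 1"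
  defines "g \<equiv> (\<lambda>s. f s - (if s = 0 then 0 else f (s - 1)))"
  defines "Q \<equiv> (\<Sum>s\<le>B. monom (g s) s)"
  shows "(\<forall>s. coeff Q s = g s)
         \<and> lead_coeff Q = 1
         \<and> coeff Q 0 = 1
         \<and> (\<forall>i. coeff Q i \<noteq> 0 \<longrightarrow> coeff Q i = 1 \<or> coeff Q i = -1)
         \<and> (\<forall>i j. i < j \<and> coeff Q i \<noteq> 0 \<and> coeff Q j \<noteq> 0
                  \<and> (\<forall>k. i < k \<and> k < j \<longrightarrow> coeff Q k = 0)
                  \<longrightarrow> coeff Q j = - coeff Q i)"
proof -
  have gB: "g s = 0" if "s > B" for s
  proof -
    have "f s = 1" "f (s - 1) = 1" using fB that by auto
    thus ?thesis using that by (simp add: g_def)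
  qed
  have cQ: "coeff Q s = g s" for s
  proof -
    have "coeff Q s = (\<Sum>x\<le>B. if x = s then g x else 0)"
      by (simp add: Q_def coeff_sum coeff_monom)
    also have "\<dots> = (if s \<le> B then g s else 0)" by (simp add: sum.delta)
    also have "\<dots> = g s" using gB by auto
    finally show ?thesis .
  qed
  have g0: "g 0 = 1" using f0 by (simp add: g_def)
  have gval: "g s = 0 \<or> g s = 1 \<or> g s = -1" for s
    using f01[of s] f01[of "s - 1"] by (auto simp: g_def)
  have const: "f (i + d) = f i" if "\<forall>k. i < k \<and> k \<le> i + d \<longrightarrow> g k = 0" for i d
    using that
  proof (induction d)
    case 0 thus ?case by simp
  next
    case (Suc d)
    hence "f (i + d) = f i" by auto
    moreover have "g (i + Suc d) = 0" using Suc.prems by auto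
    ultimately show ?case by (simp add: g_def)
  qed
  have alt: "g j = - g i" if ij: "i < j" "g i \<noteq> 0" "g j \<noteq> 0" "\<forall>k. i < k \<and> k < j \<longrightarrow> g k = 0" for i j
  proof -
    have "f (i + (j - 1 - i)) = f i" using ij by (intro const) auto
    hence fj1: "f (j - 1) = f i" using ij by simp
    have gj: "g j = f j - f (j - 1)" using ij by (simp add: g_def)
    have gi: "g i = 2 * f i - 1"
    proof (cases "i = 0")
      case True thus ?thesis using f0 g0 by simp
    next
      case False
      hence "g i = f i - f (i - 1)" by (simp add: g_def)
      thus ?thesis using ij(2) f01[of i] f01[of "i - 1"] by auto
    qed
    show ?thesis using gj gi fj1 ij(3) f01[of j] f01[of i] by auto
  qed
  have Q0: "Q \<noteq> 0" using cQ[of 0] g0 by auto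
  define d where "d = degree Q"
  have gd: "g d \<noteq> 0" using Q0 cQ[of d] leading_coeff_neq_0[OF Q0] by (simp add: d_def)
  have fd: "f d = 1"
  proof -
    have "f (d + B) = f d"
      by (intro const) (auto simp: cQ[symmetric] d_def intro: coeff_eq_0)
    thus ?thesis using fB[of "d + B"] by simp
  qed
  have lc: "g d = 1"
  proof (cases "d = 0")
    case True thus ?thesis using g0 by simp
  next
    case False
    hence "g d = 1 - f (d - 1)" using fd by (simp add: g_def)
    thus ?thesis using gd f01[of "d - 1"] by auto
  qed
  show ?thesis
    using cQ g0 gval alt lc by (auto simp: d_def)
qed



lemma one_minus_X_nth:
  "((1 - fps_X) * (f :: 'a :: comm_ring_1 fps)) $ s = f $ s - (if 1 \<le> s then f $ (s - 1) else 0)"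
  using fps_one_minus_Xpow_nth[of 1 f s] by simp

lemma one_minus_Xpow_nz: "a > 0 \<Longrightarrow> (1 - fps_X ^ a :: complex fps) \<noteq> 0"
proof -
  assume "a > 0"
  hence "(1 - fps_X ^ a :: complex fps) $ 0 = 1" by (simp only: fps_sub_nth fps_X_power_nth fps_one_nth) simp
  thus ?thesis by (metis fps_zero_nth zero_neq_one)
qed

lemma geom_fps: "(1 - fps_X ^ a) * (\<Sum>j<n. fps_X ^ (a * j)) = (1 - fps_X ^ (a * n) :: 'r :: comm_ring_1 fps)"
proof -
  have "(\<Sum>j<n. fps_X ^ (a * j)) = (\<Sum>j<n. (fps_X ^ a) ^ j :: 'r fps)" by (simp add: power_mult)
  thus ?thesis using one_diff_power_eq[of "fps_X ^ a :: 'r fps" n] by (simp add: power_mult)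
qed

theorem theorem4:
  fixes p q m n :: nat
  assumes "prime p" and "prime q" and "p \<noteq> q" and "m > 0" and "n > 0"
  shows "\<exists>Q :: int poly.
           fps_of_poly (cyclotomic (p ^ m * q ^ n) * map_poly of_int Q)
             = Abs_fps (\<lambda>k. of_int (fps_nth (semigroup_poly_fps (semigroup_gen (p ^ m) (q ^ n))) k))
         \<and> lead_coeff Q = 1
         \<and> coeff Q 0 = 1
         \<and> (\<forall>i. coeff Q i \<noteq> 0 \<longrightarrow> coeff Q i = 1 \<or> coeff Q i = -1)
         \<and> (\<forall>i j. i < j \<and> coeff Q i \<noteq> 0 \<and> coeff Q j \<noteq> 0
                  \<and> (\<forall>k. i < k \<and> k < j \<longrightarrow> coeff Q k = 0)
                  \<longrightarrow> coeff Q j = - coeff Q i)"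
proof -
  define a where "a = p ^ m"
  define b where "b = q ^ n"
  define a' where "a' = q ^ (n - 1)"
  define b' where "b' = p ^ (m - 1)"
  define c where "c = p ^ (m - 1) * q ^ (n - 1)"
  define N where "N = p ^ m * q ^ n"
  define T where "T = Tset a b a' b'"
  define S where "S = semigroup_gen a b"
  have p0: "p > 0" "q > 0" using assms prime_gt_0_nat by auto
  have cpq: "coprime p q" using assms by (simp add: primes_coprime)
  have a0: "a > 0" "b > 0" "a' > 0" "b' > 0" "c > 0" using p0 by (simp_all add: a_def b_def a'_def b'_def c_def)
  have cop1: "coprime a a'" unfolding a_def a'_def using cpq by simp
  have cop2: "coprime b b'" unfolding b_def b'_def using cpq by (simp add: coprime_commute)
  have copab: "coprime a b" unfolding a_def b_def using cpq by simp
  have d1: "a' dvd b" unfolding a'_def b_def by (simp add: le_imp_power_dvd)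
  have d2: "b' dvd a" unfolding a_def b'_def by (simp add: le_imp_power_dvd)
  have cab: "c = a' * b'" by (simp add: c_def a'_def b'_def)
  have pm: "p ^ m = p ^ (m - 1) * p" "q ^ n = q ^ (n - 1) * q" using assms(4,5) by (simp_all add: power_eq_if)
  have aa': "a * a' = c * p" unfolding a_def a'_def c_def using pm by (simp add: ac_simps)
  have bb': "b * b' = c * q" unfolding b_def b'_def c_def using pm by (simp add: ac_simps)
  have Nab: "b * a = N" by (simp add: N_def a_def b_def)
  define f :: "nat \<Rightarrow> int" where "f = (\<lambda>s. if s \<in> T then 1 else 0)"
  have f01: "f s = 0 \<or> f s = 1" for s by (simp add: f_def)
  have f0: "f 0 = 1"
  proof -
    have "0 \<in> T" unfolding T_def T_mem using a0 by (intro exI[of _ 0]) auto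
    thus ?thesis by (simp add: f_def)
  qed
  have fB: "f s = 1" if "s \<ge> a * a' + b * b'" for s
    using T_eventually[OF cop1 cop2 d1 d2 a0(3,4) that] by (simp add: f_def T_def)
  define g where "g = (\<lambda>s. f s - (if s = 0 then 0 else f (s - 1)))"
  define Q where "Q = (\<Sum>s\<le>a * a' + b * b'. monom (g s) s)"
  have AP: "(\<forall>s. coeff Q s = g s)
         \<and> lead_coeff Q = 1
         \<and> coeff Q 0 = 1
         \<and> (\<forall>i. coeff Q i \<noteq> 0 \<longrightarrow> coeff Q i = 1 \<or> coeff Q i = -1)
         \<and> (\<forall>i j. i < j \<and> coeff Q i \<noteq> 0 \<and> coeff Q j \<noteq> 0
                  \<and> (\<forall>k. i < k \<and> k < j \<longrightarrow> coeff Q k = 0)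
                  \<longrightarrow> coeff Q j = - coeff Q i)"
    unfolding Q_def g_def by (rule alt_poly) (use f01 f0 fB in auto)
  have cQ: "coeff Q s = g s" for s using AP by blast
  define X :: "complex fps" where "X = fps_X"
  define FC :: "complex fps" where "FC = Abs_fps (\<lambda>s. if s \<in> T then 1 else 0)"
  define IS :: "complex fps" where "IS = Abs_fps (\<lambda>s. if s \<in> S then 1 else 0)"
  define Phi where "Phi = fps_of_poly (cyclotomic N)"
  define A :: "complex fps" where "A = (\<Sum>k<a'. X ^ (a * k))"
  define B :: "complex fps" where "B = (\<Sum>l<b'. X ^ (b * l))"
  have FQ: "fps_of_poly (map_poly of_int Q) = (1 - X) * FC"
  proof (rule fps_ext)
    fix s
    show "fps_of_poly (map_poly of_int Q) $ s = ((1 - X) * FC) $ s"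
      unfolding X_def one_minus_X_nth by (simp add: coeff_map_poly cQ g_def f_def FC_def)
  qed
  have RS: "Abs_fps (\<lambda>k. of_int (fps_nth (semigroup_poly_fps (semigroup_gen (p ^ m) (q ^ n))) k)) = (1 - X) * IS"
  proof (rule fps_ext)
    fix s
    show "Abs_fps (\<lambda>k. of_int (fps_nth (semigroup_poly_fps (semigroup_gen (p ^ m) (q ^ n))) k)) $ s = ((1 - X) * IS) $ s"
      unfolding X_def one_minus_X_nth semigroup_poly_fps_def
      by (simp add: IS_def S_def a_def b_def)
  qed
  have E1: "(1 - X ^ a) * (1 - X ^ b) * IS = 1 - X ^ N"
  proof -
    have "(1 - X ^ a) * IS = (\<Sum>j<a. X ^ (j * b))"
      unfolding X_def IS_def S_def by (rule S_apery[OF a0(1,2) copab])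
    hence "(1 - X ^ a) * (1 - X ^ b) * IS = (1 - X ^ b) * (\<Sum>j<a. X ^ (b * j))"
      by (simp add: ac_simps)
    also have "\<dots> = 1 - X ^ N" using geom_fps[of b a] Nab by (simp add: X_def)
    finally show ?thesis .
  qed
  have E2: "(1 - X ^ c) * FC = A * B"
  proof -
    have "(1 - X ^ c) * FC = (\<Sum>x\<in>{..<a'} \<times> {..<b'}. X ^ ((\<lambda>(k, l). a * k + b * l) x))"
      unfolding X_def FC_def T_def cab by (rule T_apery[OF cop1 cop2 d1 d2 a0(3,4)])
    also have "\<dots> = A * B"
      unfolding A_def B_def by (simp add: sum_product sum.cartesian_product power_add case_prod_beta)
    finally show ?thesis .
  qed
  have E3: "(1 - X ^ a) * A = 1 - X ^ (c * p)" unfolding A_def X_def using geom_fps[of a a'] aa' by simp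
  have E4: "(1 - X ^ b) * B = 1 - X ^ (c * q)" unfolding B_def X_def using geom_fps[of b b'] bb' by simp
  have E5: "Phi * (1 - X ^ (c * p)) * (1 - X ^ (c * q)) = (1 - X ^ N) * (1 - X ^ c)"
  proof -
    have "fps_of_poly (cyclotomic N * (monom 1 (c * p) - 1) * (monom 1 (c * q) - 1))
        = fps_of_poly ((monom 1 N - 1) * (monom 1 c - 1))"
      using cyclo_identity[OF assms] unfolding N_def c_def by simp
    hence "Phi * (X ^ (c * p) - 1) * (X ^ (c * q) - 1) = (X ^ N - 1) * (X ^ c - 1)"
      by (simp add: Phi_def X_def fps_of_poly_mult fps_of_poly_diff fps_of_poly_monom')
    moreover have "\<And>u v. (X ^ u - 1) * (X ^ v - 1) = (1 - X ^ u) * (1 - X ^ v)"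
      by (simp add: algebra_simps)
    ultimately show ?thesis by (metis mult.assoc)
  qed
  define D where "D = (1 - X ^ a) * (1 - X ^ b) * (1 - X ^ c)"
  have D0: "D \<noteq> 0" unfolding D_def X_def using one_minus_Xpow_nz a0 by simp
  have "Phi * ((1 - X) * FC) * D = (1 - X) * Phi * ((1 - X ^ c) * FC) * (1 - X ^ a) * (1 - X ^ b)"
    unfolding D_def by (simp only: ac_simps)
  also have "\<dots> = (1 - X) * (Phi * ((1 - X ^ a) * A) * ((1 - X ^ b) * B))"
    unfolding E2 by (simp only: ac_simps)
  also have "\<dots> = (1 - X) * ((1 - X ^ N) * (1 - X ^ c))"
    unfolding E3 E4 E5 ..
  also have "\<dots> = (1 - X) * ((1 - X ^ a) * (1 - X ^ b) * IS) * (1 - X ^ c)"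
    unfolding E1 by (simp only: ac_simps)
  also have "\<dots> = (1 - X) * IS * D"
    unfolding D_def by (simp only: ac_simps)
  finally have "Phi * ((1 - X) * FC) = (1 - X) * IS" using D0 by simp
  hence main: "fps_of_poly (cyclotomic (p ^ m * q ^ n) * map_poly of_int Q)
       = Abs_fps (\<lambda>k. of_int (fps_nth (semigroup_poly_fps (semigroup_gen (p ^ m) (q ^ n))) k))"
    unfolding RS fps_of_poly_mult FQ by (simp add: Phi_def N_def)
  show ?thesis
    by (rule exI[of _ Q]) (use main AP in blast)
qed


end
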